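(* For the sequence $\{\bm g^t=(\bm\beta^t,\bm z^t,\bm u^t)\}$ generated by the parallel PPA or the improved parallel PPA, $$\|\bm g^t-\bm g^{t+1}\|_{\bm H_*}^2\le\|\bm g^{t-1}-\bm g^t\|_{\bm H_*}^2,$$ where $\bm H_*=\bm H$ for the parallel PPA and $\bm H_*=\bm H_K$ for the improved parallel PPA.
   Context: Dantzig selector in split form: with $\bm X=(\bm X_1,\dots,\bm X_K)\in\mathbb R^{n\times p}$, $\bm y\in\mathbb R^n$, $\bm A=\bm X^\top\bm X=(\bm A_1,\dots,\bm A_K)$, $\bm A_i=\bm X^\top\bm X_i\in\mathbb R^{p\times p_i}$, $\bm\beta=(\bm\beta_{1\cdot}^\top,\dots,\bm\beta_{K\cdot}^\top)^\top$, solve $\min_{\bm\beta,\bm z}\sum_i\|\bm\beta_{i\cdot}\|_1+\delta(\bm z)$ s.t. $\sum_i\bm A_i\bm\beta_{i\cdot}-\bm z=\bm X^\top\bm y$, where $\delta$ is the indicator of $\{\bm z:\|\bm z\|_\infty\le n\lambda\}$. Parallel PPA with $\mu>0$ and $\eta$ larger than the largest eigenvalue of $\mu\bm A^\top\bm A$: $\bm\beta_{i\cdot}^{t+1}=\mathrm{sign}(\bm v_i)\odot\max\{|\bm v_i|-1/\eta,0\}$ with $\bm v_i=\bm\beta_{i\cdot}^t+\bm A_i^\top\bm u^t/\eta$; $\bm z^{t+1}=\min\{\max\{\bm z^t-\bm u^t/\mu,-n\lambda\},n\lambda\}$; $\bm u^{t+1}=\bm u^t-\frac{\mu}{2}[2(\bm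 A\bm\beta^{t+1}-\bm z^{t+1}-\bm X^\top\bm y)-(\bm A\bm\beta^t-\bm z^t-\bm X^\top\bm y)]$. Improved parallel PPA: same but $\eta$ replaced by $\eta_i$ (larger than the largest eigenvalue of $\mu\bm A_i^\top\bm A_i$) in block $i$, and $\frac{\mu}{2}$ replaced by $\frac{\mu}{K+1}$ in the $\bm u$ update. $\|\bm v\|_{\bm H}=\sqrt{\bm v^\top\bm H\bm v}$, with $\bm H=\begin{pmatrix}\eta\bm I_p&\bm 0&\bm A^\top\\\bm 0&\mu\bm I_p&-\bm I_p\\\bm A&-\bm I_p&\frac{2}{\mu}\bm I_p\end{pmatrix}$ and $\bm H_K=\begin{pmatrix}\mathrm{diag}(\eta_1\bm I_{p_1},\dots,\eta_K\bm I_{p_K},\mu\bm I_p)&\bm G^\top\\\bm G&\frac{K+1}{\mu}\bm I_p\end{pmatrix}$, $\bm G=(\bm A_1,\dots,\bm A_K,-\bm I_p)$; both positive definite. *)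

theory Defs
  imports "HOL-Analysis.Analysis"
begin

text \<open>Coordinates of beta, z, u are indexed by the finite type 'p (so p = CARD('p)),
  samples by the finite type 'n (so n = CARD('n)).  The K column blocks are encoded by
  a block-assignment function blk :: 'p => nat with values < K; block i is
  {j. blk j = i}.\<close>

definition gram :: "real^'p^'n \<Rightarrow> real^'p^'p" where
  "gram X = transpose X ** X"

definition is_eigenvalue :: "real^'p^'p \<Rightarrow> real \<Rightarrow> bool" where
  "is_eigenvalue M c \<longleftrightarrow> (\<exists>v. v \<noteq> 0 \<and> M *v v = c *s v)"

text \<open>c is an eigenvalue of the principal submatrix of M on the index set
  {j. blk j = i} (for M = mu A^T A this submatrix is mu A_i^T A_i).\<close>
definition is_block_eigenvalue :: "real^'p^'p \<Rightarrow> ('p \<Rightarrow> nat) \<Rightarrow> nat \<Rightarrow> real \<Rightarrow> bool" where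
  "is_block_eigenvalue M blk i c \<longleftrightarrow>
     (\<exists>v. v \<noteq> 0 \<and> (\<forall>j. blk j \<noteq> i \<longrightarrow> v $ j = 0) \<and>
          (\<forall>j. blk j = i \<longrightarrow> (M *v v) $ j = c * v $ j))"

definition soft :: "real \<Rightarrow> real \<Rightarrow> real" where
  "soft v a = sgn v * max (\<bar>v\<bar> - a) 0"

definition clamp :: "real \<Rightarrow> real \<Rightarrow> real" where
  "clamp v b = min (max v (- b)) b"

definition ppa_step ::
  "real^'p^'n \<Rightarrow> real^'n \<Rightarrow> real \<Rightarrow> real \<Rightarrow> real \<Rightarrow>
   real^'p \<Rightarrow> real^'p \<Rightarrow> real^'p \<Rightarrow> real^'p \<Rightarrow> real^'p \<Rightarrow> real^'p \<Rightarrow> bool" where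
  "ppa_step X y lam mu eta b z u b' z' u' \<longleftrightarrow>
     (let A = gram X; c = transpose X *v y; n = real CARD('n) in
      b' = (\<chi> j. soft (b $ j + (transpose A *v u) $ j / eta) (1 / eta)) \<and>
      z' = (\<chi> j. clamp (z $ j - u $ j / mu) (n * lam)) \<and>
      u' = u - (mu / 2) *s (2 *s (A *v b' - z' - c) - (A *v b - z - c)))"

definition ippa_step ::
  "real^'p^'n \<Rightarrow> real^'n \<Rightarrow> real \<Rightarrow> ('p \<Rightarrow> nat) \<Rightarrow> nat \<Rightarrow> real \<Rightarrow> (nat \<Rightarrow> real) \<Rightarrow>
   real^'p \<Rightarrow> real^'p \<Rightarrow> real^'p \<Rightarrow> real^'p \<Rightarrow> real^'p \<Rightarrow> real^'p \<Rightarrow> bool" where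
  "ippa_step X y lam blk K mu eta b z u b' z' u' \<longleftrightarrow>
     (let A = gram X; c = transpose X *v y; n = real CARD('n) in
      b' = (\<chi> j. soft (b $ j + (transpose A *v u) $ j / eta (blk j)) (1 / eta (blk j))) \<and>
      z' = (\<chi> j. clamp (z $ j - u $ j / mu) (n * lam)) \<and>
      u' = u - (mu / real (K + 1)) *s (2 *s (A *v b' - z' - c) - (A *v b - z - c)))"

text \<open>||(b,z,u)||_H^2 for H = [[eta I, 0, A^T],[0, mu I, -I],[A, -I, (2/mu) I]],
  written out as the quadratic form.\<close>
definition H_normsq ::
  "real^'p^'p \<Rightarrow> real \<Rightarrow> real \<Rightarrow> real^'p \<Rightarrow> real^'p \<Rightarrow> real^'p \<Rightarrow> real" where
  "H_normsq A mu eta b z u =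
     eta * (b \<bullet> b) + 2 * (b \<bullet> (transpose A *v u)) + mu * (z \<bullet> z)
     - 2 * (z \<bullet> u) + (2 / mu) * (u \<bullet> u)"

text \<open>||(b,z,u)||_{H_K}^2 for H_K = [[diag(eta_1 I,...,eta_K I, mu I), G^T],[G, (K+1)/mu I]],
  G = (A_1,...,A_K,-I), so that G (b,z) = A b - z; written out as the quadratic form.\<close>
definition HK_normsq ::
  "real^'p^'p \<Rightarrow> ('p \<Rightarrow> nat) \<Rightarrow> nat \<Rightarrow> real \<Rightarrow> (nat \<Rightarrow> real) \<Rightarrow>
   real^'p \<Rightarrow> real^'p \<Rightarrow> real^'p \<Rightarrow> real" where
  "HK_normsq A blk K mu eta b z u =
     (\<Sum>j\<in>UNIV. eta (blk j) * (b $ j)^2) + mu * (z \<bullet> z)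
     + 2 * (u \<bullet> (A *v b - z)) + (real (K + 1) / mu) * (u \<bullet> u)"

end

theory Submission
  imports Defs
begin


lemma inner_transpose: "(x::real^'m) \<bullet> (transpose A *v y) = (A *v x) \<bullet> (y::real^'n)"
  by (metis dot_lmul_matrix inner_commute transpose_matrix_vector)

lemma firm_aux: "(0::real) \<le> d \<and> d \<le> w \<or> w \<le> d \<and> d \<le> 0 \<Longrightarrow> d * w \<ge> d^2"
  unfolding power2_eq_square
  by (metis mult_left_mono mult_left_mono_neg)

lemma soft_firm: "0 < a \<Longrightarrow> (soft v1 a - soft v2 a) * (v1 - v2) \<ge> (soft v1 a - soft v2 a)^2"
  apply (rule firm_aux)
  unfolding soft_def
  by (auto simp: sgn_if max_def abs_if)

lemma clamp_firm: "(clamp v1 B - clamp v2 B) * (v1 - v2) \<ge> (clamp v1 B - clamp v2 B)^2"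
  apply (rule firm_aux)
  unfolding clamp_def
  by (auto simp: min_def max_def)



definition Ef :: "('p::finite \<Rightarrow> real) \<Rightarrow> real^'p \<Rightarrow> real^'p \<Rightarrow> real" where
  "Ef e x y = (\<Sum>j\<in>UNIV. e j * (x$j) * (y$j))"

definition Qf :: "real^'p^'p \<Rightarrow> ('p::finite \<Rightarrow> real) \<Rightarrow> real \<Rightarrow> real \<Rightarrow> real^'p \<Rightarrow> real^'p \<Rightarrow> real^'p \<Rightarrow> real" where
  "Qf A e mu kap b z u = Ef e b b + 2*((A *v b) \<bullet> u) + mu*(z \<bullet> z) - 2*(z \<bullet> u) + (1/kap)*(u \<bullet> u)"

lemma Ef_add: "Ef e (x+y) (x+y) = Ef e x x + 2 * Ef e x y + Ef e y y"
  unfolding Ef_def by (simp add: sum.distrib sum_distrib_left algebra_simps)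

lemma Ef_sub_right: "Ef e x (y - z) = Ef e x y - Ef e x z"
  unfolding Ef_def by (simp add: sum_subtractf algebra_simps)

lemma Qf_add: "Qf A e mu kap (b1+b2) (z1+z2) (u1+u2) = Qf A e mu kap b1 z1 u1 + Qf A e mu kap b2 z2 u2
   + 2*(Ef e b1 b2 + (A *v b1) \<bullet> u2 + (A *v b2) \<bullet> u1 + mu*(z1 \<bullet> z2) - z1 \<bullet> u2 - z2 \<bullet> u1 + (1/kap)*(u1 \<bullet> u2))"
  unfolding Qf_def Ef_add
  by (simp add: matrix_vector_right_distrib inner_add_left inner_add_right inner_commute algebra_simps)

lemma key:
  fixes A :: "real^'p::finite^'p"
  assumes Fb: "Ef e bb (ab - bb) + (A *v bb) \<bullet> au \<ge> 0"
    and Fz: "mu*(bz \<bullet> (az - bz)) - bz \<bullet> au \<ge> 0"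
    and U: "au - bu = kap *\<^sub>R (2 *\<^sub>R (A *v bb - bz) - (A *v ab - az))"
    and kap: "kap > 0"
    and psd: "Qf A e mu kap (ab-bb) (az-bz) (au-bu) \<ge> 0"
  shows "Qf A e mu kap bb bz bu \<le> Qf A e mu kap ab az au"
proof -
  define db where "db = ab - bb"
  define dz where "dz = az - bz"
  define du where "du = au - bu"
  have a: "ab = bb + db" "az = bz + dz" "au = bu + du" by (auto simp: db_def dz_def du_def)
  have U': "(1/kap) * (bu \<bullet> du) = bu \<bullet> (A *v bb) - bu \<bullet> bz - bu \<bullet> (A *v db) + bu \<bullet> dz"
  proof -
    have Ud: "du = kap *\<^sub>R (2 *\<^sub>R (A *v bb - bz) - (A *v (bb + db) - (bz + dz)))"
      using U unfolding du_def[symmetric] a(1) a(2) .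
    show ?thesis using kap unfolding Ud
    by (simp add: matrix_vector_right_distrib inner_add_left inner_add_right inner_diff_right inner_commute algebra_simps)
  qed
  have Fb': "Ef e bb db + (A *v bb) \<bullet> bu + (A *v bb) \<bullet> du \<ge> 0"
    using Fb unfolding a by (simp add: inner_add_right db_def)
  have Fz': "mu*(bz \<bullet> dz) - bz \<bullet> bu - bz \<bullet> du \<ge> 0"
    using Fz unfolding a by (simp add: inner_add_right dz_def)
  have "Qf A e mu kap ab az au = Qf A e mu kap bb bz bu + Qf A e mu kap db dz du
   + 2*(Ef e bb db + (A *v bb) \<bullet> du + (A *v db) \<bullet> bu + mu*(bz \<bullet> dz) - bz \<bullet> du - dz \<bullet> bu + (1/kap)*(bu \<bullet> du))"
    unfolding a by (rule Qf_add)
  moreover have "Qf A e mu kap db dz du \<ge> 0" using psd by (simp add: db_def dz_def du_def)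
  ultimately show ?thesis using U' Fb' Fz' by (simp add: inner_commute)
qed



lemma gen_step:
  fixes A :: "real^'p::finite^'p"
  assumes e: "\<And>j. e j > 0" and mu: "mu > 0" and kap: "kap > 0"
    and b1: "b1 = (\<chi> j. soft (b0$j + (transpose A *v u0)$j / e j) (1 / e j))"
    and z1: "z1 = (\<chi> j. clamp (z0$j - u0$j / mu) B)"
    and u1: "u1 = u0 - kap *s (2 *s (A *v b1 - z1 - c) - (A *v b0 - z0 - c))"
    and b2: "b2 = (\<chi> j. soft (b1$j + (transpose A *v u1)$j / e j) (1 / e j))"
    and z2: "z2 = (\<chi> j. clamp (z1$j - u1$j / mu) B)"
    and u2: "u2 = u1 - kap *s (2 *s (A *v b2 - z2 - c) - (A *v b1 - z1 - c))"
    and psd: "\<And>b z u. Qf A e mu kap b z u \<ge> 0"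
  shows "Qf A e mu kap (b1-b2) (z1-z2) (u1-u2) \<le> Qf A e mu kap (b0-b1) (z0-z1) (u0-u1)"
proof (rule key[OF _ _ _ kap psd])
  have "e j * ((b1-b2)$j) * (((b0-b1) - (b1-b2))$j) + ((b1-b2)$j) * ((transpose A *v (u0 - u1))$j) \<ge> 0" for j
  proof -
    define v1 where "v1 = b0$j + (transpose A *v u0)$j / e j"
    define v2 where "v2 = b1$j + (transpose A *v u1)$j / e j"
    have "(soft v1 (1 / e j) - soft v2 (1 / e j)) * (v1 - v2) \<ge> (soft v1 (1 / e j) - soft v2 (1 / e j))^2"
      using e[of j] by (intro soft_firm) simp
    then have h: "(b1$j - b2$j) * (v1 - v2) \<ge> (b1$j - b2$j)^2"
      by (simp add: b1 b2 v1_def v2_def)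
    have "e j * ((b1$j - b2$j) * (v1 - v2)) \<ge> e j * (b1$j - b2$j)^2"
      using h e[of j] by (simp add: mult_left_mono)
    moreover have eq: "e j * (v1 - v2) = e j * (b0$j - b1$j) + ((transpose A *v (u0 - u1))$j)"
      using e[of j] unfolding v1_def v2_def
      by (simp add: matrix_vector_mult_diff_distrib field_simps)
    moreover have "(b1$j - b2$j) * (e j * (v1 - v2)) = e j * (b1$j - b2$j) * (b0$j - b1$j) + (b1$j - b2$j) * ((transpose A *v (u0 - u1))$j)"
      unfolding eq by (simp add: algebra_simps)
    ultimately show ?thesis
      by (simp add: power2_eq_square algebra_simps)
  qed
  then have "0 \<le> (\<Sum>j\<in>UNIV. e j * ((b1-b2)$j) * (((b0-b1) - (b1-b2))$j) + ((b1-b2)$j) * ((transpose A *v (u0 - u1))$j))"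
    by (intro sum_nonneg) auto
  then show "Ef e (b1-b2) ((b0-b1) - (b1-b2)) + (A *v (b1-b2)) \<bullet> (u0-u1) \<ge> 0"
    unfolding Ef_def inner_transpose[symmetric] by (simp add: inner_vec_def sum.distrib)
next
  have "mu * ((z1-z2)$j * (((z0-z1) - (z1-z2))$j)) - (z1-z2)$j * (u0-u1)$j \<ge> 0" for j
  proof -
    define v1 where "v1 = z0$j - u0$j / mu"
    define v2 where "v2 = z1$j - u1$j / mu"
    have "(clamp v1 B - clamp v2 B) * (v1 - v2) \<ge> (clamp v1 B - clamp v2 B)^2"
      by (rule clamp_firm)
    then have h: "(z1$j - z2$j) * (v1 - v2) \<ge> (z1$j - z2$j)^2"
      by (simp add: z1 z2 v1_def v2_def)
    have "mu * ((z1$j - z2$j) * (v1 - v2)) \<ge> mu * (z1$j - z2$j)^2"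
      using h mu by (simp add: mult_left_mono)
    moreover have eq: "mu * (v1 - v2) = mu * (z0$j - z1$j) - (u0$j - u1$j)"
      using mu unfolding v1_def v2_def by (simp add: field_simps)
    moreover have "(z1$j - z2$j) * (mu * (v1 - v2)) = mu * (z1$j - z2$j) * (z0$j - z1$j) - (z1$j - z2$j) * (u0$j - u1$j)"
      unfolding eq by (simp add: algebra_simps)
    ultimately show ?thesis
      by (simp add: power2_eq_square algebra_simps)
  qed
  then have "0 \<le> (\<Sum>j\<in>UNIV. mu * ((z1-z2)$j * (((z0-z1) - (z1-z2))$j)) - (z1-z2)$j * (u0-u1)$j)"
    by (intro sum_nonneg) auto
  then show "mu*((z1-z2) \<bullet> ((z0-z1) - (z1-z2))) - (z1-z2) \<bullet> (u0-u1) \<ge> 0"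
    by (simp add: inner_vec_def sum_subtractf sum_distrib_left)
next
  show "(u0-u1) - (u1-u2) = kap *\<^sub>R (2 *\<^sub>R (A *v (b1-b2) - (z1-z2)) - (A *v (b0-b1) - (z0-z1)))"
    unfolding u2 u1 scalar_mult_eq_scaleR
    by (simp add: matrix_vector_mult_diff_distrib algebra_simps scaleR_diff_right)
qed



lemma quad_zero: fixes a b :: real assumes "\<forall>t. 0 \<le> 2*t*a + t^2*b" shows "a = 0"
proof (rule ccontr)
  assume a: "a \<noteq> 0"
  have b: "b \<ge> 0" using assms[rule_format, of 1] assms[rule_format, of "-1"] by simp
  define t where "t = - a / (b + 1)"
  have tc: "t*(b+1) = -a" unfolding t_def using b by simp
  have "(b+1)^2*(2*t*a+t^2*b) = 2*a*(t*(b+1))*(b+1) + (t*(b+1))^2*b"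
    by (simp add: power2_eq_square algebra_simps)
  also have "\<dots> = a^2 * (- b - 2)" unfolding tc by (simp add: power2_eq_square algebra_simps)
  also have "\<dots> < 0" using a b by (simp add: mult_pos_neg)
  finally have "(b+1)^2*(2*t*a+t^2*b) < 0" .
  moreover have "(b+1)^2*(2*t*a+t^2*b) \<ge> 0" using assms by simp
  ultimately show False by simp
qed

lemma rayleigh:
  fixes M :: "real^'p::finite^'p" and P :: "'p set"
  assumes sym: "\<And>x y. x \<bullet> (M *v y) = y \<bullet> (M *v x)"
    and ex: "j0 \<in> P"
  obtains lam v where "v \<noteq> 0" "\<forall>j. j \<notin> P \<longrightarrow> v$j = 0" "\<forall>j. j \<in> P \<longrightarrow> (M *v v)$j = lam * v$j"
    "v \<bullet> v = 1" "v \<bullet> (M *v v) = lam"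
    "\<forall>x. (\<forall>j. j \<notin> P \<longrightarrow> x$j = 0) \<longrightarrow> x \<bullet> (M *v x) \<le> lam * (x \<bullet> x)"
proof -
  define S where "S = sphere (0::real^'p) 1 \<inter> (\<Inter>j\<in>-P. {x. x$j = 0})"
  have cl: "closed {x::real^'p. x$j = 0}" for j
    by (simp add: closed_Collect_eq continuous_on_component)
  have "compact S" unfolding S_def
    by (intro compact_Int_closed compact_sphere closed_INT) (use cl in auto)
  moreover have "axis j0 1 \<in> S" using ex by (simp add: S_def) (auto simp: axis_def)
  then have "S \<noteq> {}" by auto
  moreover have "continuous_on S (\<lambda>x. x \<bullet> (M *v x))" by (intro continuous_intros)
  ultimately obtain v where vS: "v \<in> S" and vmax: "\<forall>y\<in>S. y \<bullet> (M *v y) \<le> v \<bullet> (M *v v)"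
    using continuous_attains_sup by blast
  define lam where "lam = v \<bullet> (M *v v)"
  have v1: "v \<bullet> v = 1" using vS unfolding S_def by (simp add: inner_commute dot_square_norm)
  have vsupp: "\<forall>j. j \<notin> P \<longrightarrow> v$j = 0" using vS unfolding S_def by auto
  have bound: "x \<bullet> (M *v x) \<le> lam * (x \<bullet> x)" if xs: "\<forall>j. j \<notin> P \<longrightarrow> x$j = 0" for x
  proof (cases "x = 0")
    case True then show ?thesis by simp
  next
    case False
    define y where "y = (1 / norm x) *\<^sub>R x"
    have "y \<in> S" unfolding S_def y_def using False xs by auto
    then have "y \<bullet> (M *v y) \<le> lam" using vmax lam_def by auto
    moreover have "y \<bullet> (M *v y) = (x \<bullet> (M *v x)) / (x \<bullet> x)"
      unfolding y_def using False
      by (simp add: matrix_vector_mult_scaleR dot_square_norm power2_eq_square)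
    moreover have "x \<bullet> x > 0" using False by simp
    ultimately show ?thesis by (simp add: field_simps)
  qed
  have eig: "(M *v v)$j = lam * v$j" if jP: "j \<in> P" for j
  proof -
    define w :: "real^'p" where "w = axis j 1"
    have ws: "\<forall>i. i \<notin> P \<longrightarrow> w$i = 0" using jP unfolding w_def by (auto simp: axis_def)
    have "0 \<le> 2*t*(w \<bullet> (lam *\<^sub>R v - M *v v)) + t^2 * (w \<bullet> (lam *\<^sub>R w - M *v w))" for t
    proof -
      have A: "(v + t *\<^sub>R w) \<bullet> (M *v (v + t *\<^sub>R w)) \<le> lam * ((v + t *\<^sub>R w) \<bullet> (v + t *\<^sub>R w))"
        using bound[of "v + t *\<^sub>R w"] vsupp ws by auto
      moreover have E1: "(v + t *\<^sub>R w) \<bullet> (M *v (v + t *\<^sub>R w)) = lam + 2*t*(w \<bullet> (M *v v)) + t^2 * (w \<bullet> (M *v w))"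
        using sym[of v w] unfolding lam_def
        by (simp add: matrix_vector_right_distrib matrix_vector_mult_scaleR inner_add_left inner_add_right power2_eq_square algebra_simps)
      moreover have E2: "(v + t *\<^sub>R w) \<bullet> (v + t *\<^sub>R w) = 1 + 2*t*(w \<bullet> v) + t^2*(w \<bullet> w)"
        using v1 by (simp add: inner_add_left inner_add_right inner_commute power2_eq_square algebra_simps)
      ultimately have "lam + 2*t*(w \<bullet> (M *v v)) + t^2 * (w \<bullet> (M *v w)) \<le> lam * (1 + 2*t*(w \<bullet> v) + t^2*(w \<bullet> w))"
        by metis
      then show ?thesis
        by (simp add: inner_diff_right algebra_simps)
    qed
    then have "w \<bullet> (lam *\<^sub>R v - M *v v) = 0" by (intro quad_zero) auto
    then show ?thesis unfolding w_def by (simp add: inner_axis' inner_diff_right)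
  qed
  show ?thesis
    apply (rule that[of v lam])
    using v1 vsupp eig bound lam_def by auto
qed



lemma M_form:
  fixes G :: "real^'p::finite^'p"
  shows "x \<bullet> ((mu *\<^sub>R (transpose G ** G)) *v y) = mu * ((G *v x) \<bullet> (G *v y))"
proof -
  have "(mu *\<^sub>R (transpose G ** G)) *v y = mu *\<^sub>R (transpose G *v (G *v y))"
    by (simp only: scaleR_matrix_vector_assoc[symmetric] matrix_vector_mul_assoc)
  then show ?thesis by (simp only: inner_scaleR_right inner_transpose)
qed

lemma psd_bound:
  fixes G :: "real^'p::finite^'p" and P :: "'p set"
  assumes mu: "mu > 0" and ex: "j0 \<in> P"
    and hyp: "\<And>c v. v \<noteq> 0 \<Longrightarrow> \<forall>j. j \<notin> P \<longrightarrow> v$j = 0 \<Longrightarrow>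
               \<forall>j. j \<in> P \<longrightarrow> ((mu *\<^sub>R (transpose G ** G)) *v v)$j = c * v$j \<Longrightarrow> c < eta"
  shows "eta > 0" "\<And>x. \<forall>j. j \<notin> P \<longrightarrow> x$j = 0 \<Longrightarrow> mu * ((G *v x) \<bullet> (G *v x)) \<le> eta * (x \<bullet> x)"
proof -
  let ?M = "mu *\<^sub>R (transpose G ** G)"
  have sym: "x \<bullet> (?M *v y) = y \<bullet> (?M *v x)" for x y by (simp add: M_form inner_commute)
  obtain lam v where v: "v \<noteq> 0" "\<forall>j. j \<notin> P \<longrightarrow> v$j = 0" "\<forall>j. j \<in> P \<longrightarrow> (?M *v v)$j = lam * v$j"
    "v \<bullet> v = 1" "v \<bullet> (?M *v v) = lam"
    "\<forall>x. (\<forall>j. j \<notin> P \<longrightarrow> x$j = 0) \<longrightarrow> x \<bullet> (?M *v x) \<le> lam * (x \<bullet> x)"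
    using rayleigh[of ?M j0 P, OF sym ex] by metis
  have lt: "lam < eta" using hyp v(1-3) by blast
  have "(G *v v) \<bullet> (G *v v) \<ge> 0" by simp
  then have "lam \<ge> 0" using v(5) mu unfolding M_form by (metis mult_nonneg_nonneg less_imp_le)
  then show "eta > 0" using lt by simp
  fix x :: "real^'p" assume "\<forall>j. j \<notin> P \<longrightarrow> x$j = 0"
  then have "mu * ((G *v x) \<bullet> (G *v x)) \<le> lam * (x \<bullet> x)" using v(6) unfolding M_form by blast
  also have "\<dots> \<le> eta * (x \<bullet> x)" using lt by (intro mult_right_mono) auto
  finally show "mu * ((G *v x) \<bullet> (G *v x)) \<le> eta * (x \<bullet> x)" .
qed

lemma sq_expand: "(1/mu) * ((mu *\<^sub>R a + u) \<bullet> (mu *\<^sub>R a + u)) = mu * (a \<bullet> a) + 2 * (a \<bullet> u) + (1/mu) * (u \<bullet> u)"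
  if "mu > 0" for a u :: "real^'p::finite"
  using that by (simp add: inner_add_left inner_add_right inner_commute power2_eq_square field_simps)

lemma psd1:
  fixes G :: "real^'p::finite^'p"
  assumes mu: "mu > 0" and B: "\<And>x. mu * ((G *v x) \<bullet> (G *v x)) \<le> eta * (x \<bullet> x)"
  shows "Qf G (\<lambda>_. eta) mu (mu/2) b z u \<ge> 0"
proof -
  have "Ef (\<lambda>_. eta) b b = eta * (b \<bullet> b)" unfolding Ef_def inner_vec_def
    by (simp add: sum_distrib_left mult.assoc)
  then have "Qf G (\<lambda>_. eta) mu (mu/2) b z u = (eta * (b \<bullet> b) - mu * ((G *v b) \<bullet> (G *v b)))
     + (1/mu) * ((mu *\<^sub>R (G *v b) + u) \<bullet> (mu *\<^sub>R (G *v b) + u))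
     + (1/mu) * ((mu *\<^sub>R z + (-u)) \<bullet> (mu *\<^sub>R z + (-u)))"
    unfolding Qf_def sq_expand[OF mu] by simp
  moreover have "(1/mu) * ((mu *\<^sub>R (G *v b) + u) \<bullet> (mu *\<^sub>R (G *v b) + u)) \<ge> 0" using mu by simp
  moreover have "(1/mu) * ((mu *\<^sub>R z + (-u)) \<bullet> (mu *\<^sub>R z + (-u))) \<ge> 0" using mu by simp
  ultimately show ?thesis using B[of b] by linarith
qed

lemma psd2:
  fixes G :: "real^'p::finite^'p" and blk :: "'p \<Rightarrow> nat"
  assumes mu: "mu > 0" and blk: "\<forall>j. blk j < K"
    and B: "\<And>i x. i < K \<Longrightarrow> \<forall>j. blk j \<noteq> i \<longrightarrow> x$j = 0 \<Longrightarrow> mu * ((G *v x) \<bullet> (G *v x)) \<le> eta i * (x \<bullet> x)"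
  shows "Qf G (\<lambda>j. eta (blk j)) mu (mu / real (K+1)) b z u \<ge> 0"
proof -
  define bi where "bi i = (\<chi> j. if blk j = i then b$j else 0)" for i
  have bsum: "b = (\<Sum>i<K. bi i)"
  proof -
    have "(\<Sum>i<K. bi i)$j = b$j" for j
      using blk[rule_format, of j] by (simp add: sum_component bi_def)
    then show ?thesis by (simp add: vec_eq_iff)
  qed
  have Ef: "Ef (\<lambda>j. eta (blk j)) b b = (\<Sum>i<K. eta i * (bi i \<bullet> bi i))"
  proof -
    have "Ef (\<lambda>j. eta (blk j)) b b = (\<Sum>j\<in>UNIV. \<Sum>i<K. if blk j = i then eta i * (b$j * b$j) else 0)"
      unfolding Ef_def using blk by (intro sum.cong) (auto simp: mult.assoc)
    also have "\<dots> = (\<Sum>i<K. \<Sum>j\<in>UNIV. if blk j = i then eta i * (b$j * b$j) else 0)"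
      by (rule sum.swap)
    also have "\<dots> = (\<Sum>i<K. eta i * (bi i \<bullet> bi i))"
      unfolding inner_vec_def bi_def sum_distrib_left by (intro sum.cong) auto
    finally show ?thesis .
  qed
  have Gb: "(G *v b) \<bullet> u = (\<Sum>i<K. (G *v bi i) \<bullet> u)"
    by (subst bsum) (simp add: vec.sum inner_sum_left)
  have Ku: "(real (K+1) / mu) * (u \<bullet> u) = (\<Sum>i<K. (1/mu) * (u \<bullet> u)) + (1/mu) * (u \<bullet> u)"
    by (simp add: add_divide_distrib algebra_simps)
  have "Qf G (\<lambda>j. eta (blk j)) mu (mu / real (K+1)) b z u =
     (\<Sum>i<K. (eta i * (bi i \<bullet> bi i) - mu * ((G *v bi i) \<bullet> (G *v bi i)))
        + (1/mu) * ((mu *\<^sub>R (G *v bi i) + u) \<bullet> (mu *\<^sub>R (G *v bi i) + u)))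
     + (1/mu) * ((mu *\<^sub>R z + (-u)) \<bullet> (mu *\<^sub>R z + (-u)))"
    unfolding Qf_def sq_expand[OF mu] Ef using Gb Ku
    by (simp add: sum.distrib sum_subtractf sum_distrib_left[symmetric])
  moreover have "(\<Sum>i<K. (eta i * (bi i \<bullet> bi i) - mu * ((G *v bi i) \<bullet> (G *v bi i)))
        + (1/mu) * ((mu *\<^sub>R (G *v bi i) + u) \<bullet> (mu *\<^sub>R (G *v bi i) + u))) \<ge> 0"
  proof (intro sum_nonneg)
    fix i assume "i \<in> {..<K}"
    then have "mu * ((G *v bi i) \<bullet> (G *v bi i)) \<le> eta i * (bi i \<bullet> bi i)"
      by (intro B) (auto simp: bi_def)
    moreover have "(1/mu) * ((mu *\<^sub>R (G *v bi i) + u) \<bullet> (mu *\<^sub>R (G *v bi i) + u)) \<ge> 0" using mu by simp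
    ultimately show "(eta i * (bi i \<bullet> bi i) - mu * ((G *v bi i) \<bullet> (G *v bi i)))
        + (1/mu) * ((mu *\<^sub>R (G *v bi i) + u) \<bullet> (mu *\<^sub>R (G *v bi i) + u)) \<ge> 0" by linarith
  qed
  moreover have "(1/mu) * ((mu *\<^sub>R z + (-u)) \<bullet> (mu *\<^sub>R z + (-u))) \<ge> 0" using mu by simp
  ultimately show ?thesis by linarith
qed



lemma H_eq: "H_normsq A mu eta b z u = Qf A (\<lambda>_. eta) mu (mu/2) b z u"
  unfolding H_normsq_def Qf_def Ef_def inner_transpose
  by (simp add: inner_vec_def sum_distrib_left mult.assoc)

lemma HK_eq: "HK_normsq A blk K mu eta b z u = Qf A (\<lambda>j. eta (blk j)) mu (mu / real (K+1)) b z u"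
  unfolding HK_normsq_def Qf_def Ef_def
  by (simp add: power2_eq_square inner_diff_right inner_commute mult.assoc algebra_simps)

theorem proposition4:
  fixes X :: "real^'p::finite^'n::finite" and y :: "real^'n"
    and lam mu :: real and blk :: "'p \<Rightarrow> nat" and K :: nat
  assumes lam: "lam > 0" and mu: "mu > 0"
    and blk: "\<forall>j. blk j < K" and blocks_nonempty: "\<forall>i<K. \<exists>j. blk j = i"
  shows
   "(\<forall>(eta::real) (b::nat \<Rightarrow> real^'p) z u.
       (\<forall>c. is_eigenvalue (mu *\<^sub>R (transpose (gram X) ** gram X)) c \<longrightarrow> c < eta) \<longrightarrow>
       (\<forall>t. ppa_step X y lam mu eta (b t) (z t) (u t) (b (Suc t)) (z (Suc t)) (u (Suc t))) \<longrightarrow>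
       (\<forall>t\<ge>1. H_normsq (gram X) mu eta (b t - b (t+1)) (z t - z (t+1)) (u t - u (t+1))
               \<le> H_normsq (gram X) mu eta (b (t-1) - b t) (z (t-1) - z t) (u (t-1) - u t)))
    \<and>
    (\<forall>(eta::nat \<Rightarrow> real) (b::nat \<Rightarrow> real^'p) z u.
       (\<forall>i<K. \<forall>c. is_block_eigenvalue (mu *\<^sub>R (transpose (gram X) ** gram X)) blk i c
                    \<longrightarrow> c < eta i) \<longrightarrow>
       (\<forall>t. ippa_step X y lam blk K mu eta (b t) (z t) (u t) (b (Suc t)) (z (Suc t)) (u (Suc t))) \<longrightarrow>
       (\<forall>t\<ge>1. HK_normsq (gram X) blk K mu eta (b t - b (t+1)) (z t - z (t+1)) (u t - u (t+1))
               \<le> HK_normsq (gram X) blk K mu eta (b (t-1) - b t) (z (t-1) - z t) (u (t-1) - u t)))"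
proof (intro conjI allI impI)
  fix eta :: real and b :: "nat \<Rightarrow> real^'p" and z u and t :: nat
  assume E: "\<forall>c. is_eigenvalue (mu *\<^sub>R (transpose (gram X) ** gram X)) c \<longrightarrow> c < eta"
    and S: "\<forall>t. ppa_step X y lam mu eta (b t) (z t) (u t) (b (Suc t)) (z (Suc t)) (u (Suc t))"
    and t: "1 \<le> t"
  have hyp: "c < eta" if "v \<noteq> 0" "\<forall>j. j \<notin> UNIV \<longrightarrow> v$j = 0"
     "\<forall>j. j \<in> UNIV \<longrightarrow> ((mu *\<^sub>R (transpose (gram X) ** gram X)) *v v)$j = c * v$j" for c v
  proof -
    have "is_eigenvalue (mu *\<^sub>R (transpose (gram X) ** gram X)) c"
      unfolding is_eigenvalue_def using that by (intro exI[of _ v]) (simp add: vec_eq_iff)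
    then show ?thesis using E by blast
  qed
  note pb = psd_bound[of mu undefined UNIV "gram X" eta, OF mu _ hyp, simplified]
  obtain s where ts: "t = Suc s" using t by (cases t) auto
  have "Qf (gram X) (\<lambda>_. eta) mu (mu/2) (b (Suc s) - b (Suc (Suc s))) (z (Suc s) - z (Suc (Suc s))) (u (Suc s) - u (Suc (Suc s)))
     \<le> Qf (gram X) (\<lambda>_. eta) mu (mu/2) (b s - b (Suc s)) (z s - z (Suc s)) (u s - u (Suc s))"
    apply (rule gen_step[where B = "real CARD('n) * lam" and c = "transpose X *v y"])
    using pb(1) mu S[rule_format, of s] S[rule_format, of "Suc s"] psd1[OF mu pb(2)]
    by (auto simp: ppa_step_def Let_def)
  then show "H_normsq (gram X) mu eta (b t - b (t+1)) (z t - z (t+1)) (u t - u (t+1))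
               \<le> H_normsq (gram X) mu eta (b (t-1) - b t) (z (t-1) - z t) (u (t-1) - u t)"
    unfolding H_eq ts by simp
next
  fix eta :: "nat \<Rightarrow> real" and b :: "nat \<Rightarrow> real^'p" and z u and t :: nat
  assume E: "\<forall>i<K. \<forall>c. is_block_eigenvalue (mu *\<^sub>R (transpose (gram X) ** gram X)) blk i c \<longrightarrow> c < eta i"
    and S: "\<forall>t. ippa_step X y lam blk K mu eta (b t) (z t) (u t) (b (Suc t)) (z (Suc t)) (u (Suc t))"
    and t: "1 \<le> t"
  have pb: "eta i > 0 \<and> (\<forall>x. (\<forall>j. blk j \<noteq> i \<longrightarrow> x$j = 0) \<longrightarrow> mu * ((gram X *v x) \<bullet> (gram X *v x)) \<le> eta i * (x \<bullet> x))"
    if i: "i < K" for i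
  proof -
    obtain j0 where j0: "blk j0 = i" using blocks_nonempty i by blast
    have hyp: "c < eta i" if "v \<noteq> 0" "\<forall>j. j \<notin> {j. blk j = i} \<longrightarrow> v$j = 0"
     "\<forall>j. j \<in> {j. blk j = i} \<longrightarrow> ((mu *\<^sub>R (transpose (gram X) ** gram X)) *v v)$j = c * v$j" for c v
    proof -
      have "is_block_eigenvalue (mu *\<^sub>R (transpose (gram X) ** gram X)) blk i c"
        unfolding is_block_eigenvalue_def using that by (intro exI[of _ v]) simp
      then show ?thesis using E i by blast
    qed
    note pb = psd_bound[of mu j0 "{j. blk j = i}" "gram X" "eta i", OF mu _ hyp, simplified]
    show ?thesis using pb j0 by auto
  qed
  have epos: "eta (blk j) > 0" for j using pb blk by blast
  obtain s where ts: "t = Suc s" using t by (cases t) auto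
  have "Qf (gram X) (\<lambda>j. eta (blk j)) mu (mu / real (K+1)) (b (Suc s) - b (Suc (Suc s))) (z (Suc s) - z (Suc (Suc s))) (u (Suc s) - u (Suc (Suc s)))
     \<le> Qf (gram X) (\<lambda>j. eta (blk j)) mu (mu / real (K+1)) (b s - b (Suc s)) (z s - z (Suc s)) (u s - u (Suc s))"
    apply (rule gen_step[where B = "real CARD('n) * lam" and c = "transpose X *v y"])
    using epos mu S[rule_format, of s] S[rule_format, of "Suc s"] psd2[OF mu blk, of "gram X" eta] pb
    by (auto simp: ippa_step_def Let_def)
  then show "HK_normsq (gram X) blk K mu eta (b t - b (t+1)) (z t - z (t+1)) (u t - u (t+1))
               \<le> HK_normsq (gram X) blk K mu eta (b (t-1) - b t) (z (t-1) - z t) (u (t-1) - u t)"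
    unfolding HK_eq ts by simp
qed

end
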